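(* Let $(X,*,0)$ be a solid weak BCC-algebra and define $x\wedge y=y*(y*x)$. Then the following are equivalent: (1) $X$ is branchwise commutative; (2) for each $a\in I(X)$, the branch $B(a)$ is a semilattice with respect to the operation $\wedge$; (3) $A(x)\cap A(y)=A(x\wedge y)$ for all $x,y$ belonging to the same branch.
   Context: A weak BCC-algebra is a set $X$ with a binary operation $*$ and a constant $0$ satisfying, for all $x,y,z\in X$: (i) $((x*y)*(z*y))*(x*z)=0$; (ii) $x*x=0$; (iii) $x*0=x$; (iv) $x*y=y*x=0$ implies $x=y$. The relation $x\leqslant y$ iff $x*y=0$ is a partial order on $X$. Let $I(X)$ be the set of minimal elements of $X$ with respect to $\leqslant$. For $a\in I(X)$ the branch initiated by $a$ is $B(a)=\{x\in X: a\leqslant x\}$; "belonging to the same branch" means lying in a common $B(a)$. For $b\in X$, the initial part is $A(b)=\{x\in X: x\leqslant b\}$. A weak BCC-algebra is called (left) solid if $(x*y)*z=(x*z)*y$ holds for all $x,y$ belonging to the same branch and all $z\in X$. It is called branchwise commutative if $x*(x*y)=y*(y*x)$ holds for all $x,y$ belonging to the same branch. *)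

theory Defs
  imports Main
begin

text \<open>Weak BCC-algebra (X, *, 0) on a carrier set X; the operation is m and the constant is z.\<close>

definition weak_BCC :: "'a set \<Rightarrow> ('a \<Rightarrow> 'a \<Rightarrow> 'a) \<Rightarrow> 'a \<Rightarrow> bool" where
  "weak_BCC X m z \<longleftrightarrow>
     z \<in> X \<and> (\<forall>x\<in>X. \<forall>y\<in>X. m x y \<in> X) \<and>
     (\<forall>x\<in>X. \<forall>y\<in>X. \<forall>w\<in>X. m (m (m x y) (m w y)) (m x w) = z) \<and>
     (\<forall>x\<in>X. m x x = z) \<and>
     (\<forall>x\<in>X. m x z = x) \<and>
     (\<forall>x\<in>X. \<forall>y\<in>X. m x y = z \<and> m y x = z \<longrightarrow> x = y)"

definition bcc_le :: "('a \<Rightarrow> 'a \<Rightarrow> 'a) \<Rightarrow> 'a \<Rightarrow> 'a \<Rightarrow> 'a \<Rightarrow> bool" where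
  "bcc_le m z x y \<longleftrightarrow> m x y = z"

definition minimal_elems :: "'a set \<Rightarrow> ('a \<Rightarrow> 'a \<Rightarrow> 'a) \<Rightarrow> 'a \<Rightarrow> 'a set" where
  "minimal_elems X m z = {a \<in> X. \<forall>x\<in>X. bcc_le m z x a \<longrightarrow> x = a}"

definition branch :: "'a set \<Rightarrow> ('a \<Rightarrow> 'a \<Rightarrow> 'a) \<Rightarrow> 'a \<Rightarrow> 'a \<Rightarrow> 'a set" where
  "branch X m z a = {x \<in> X. bcc_le m z a x}"

definition initial_part :: "'a set \<Rightarrow> ('a \<Rightarrow> 'a \<Rightarrow> 'a) \<Rightarrow> 'a \<Rightarrow> 'a \<Rightarrow> 'a set" where
  "initial_part X m z b = {x \<in> X. bcc_le m z x b}"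

definition same_branch :: "'a set \<Rightarrow> ('a \<Rightarrow> 'a \<Rightarrow> 'a) \<Rightarrow> 'a \<Rightarrow> 'a \<Rightarrow> 'a \<Rightarrow> bool" where
  "same_branch X m z x y \<longleftrightarrow>
     (\<exists>a\<in>minimal_elems X m z. x \<in> branch X m z a \<and> y \<in> branch X m z a)"

definition solid :: "'a set \<Rightarrow> ('a \<Rightarrow> 'a \<Rightarrow> 'a) \<Rightarrow> 'a \<Rightarrow> bool" where
  "solid X m z \<longleftrightarrow> weak_BCC X m z \<and>
     (\<forall>x\<in>X. \<forall>y\<in>X. \<forall>w\<in>X. same_branch X m z x y \<longrightarrow> m (m x y) w = m (m x w) y)"

definition branchwise_commutative :: "'a set \<Rightarrow> ('a \<Rightarrow> 'a \<Rightarrow> 'a) \<Rightarrow> 'a \<Rightarrow> bool" where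
  "branchwise_commutative X m z \<longleftrightarrow>
     (\<forall>x\<in>X. \<forall>y\<in>X. same_branch X m z x y \<longrightarrow> m x (m x y) = m y (m y x))"

definition bcc_meet :: "('a \<Rightarrow> 'a \<Rightarrow> 'a) \<Rightarrow> 'a \<Rightarrow> 'a \<Rightarrow> 'a" where
  "bcc_meet m x y = m y (m y x)"

definition semilattice_on :: "'a set \<Rightarrow> ('a \<Rightarrow> 'a \<Rightarrow> 'a) \<Rightarrow> bool" where
  "semilattice_on S f \<longleftrightarrow>
     (\<forall>x\<in>S. \<forall>y\<in>S. f x y \<in> S) \<and>
     (\<forall>x\<in>S. f x x = x) \<and>
     (\<forall>x\<in>S. \<forall>y\<in>S. f x y = f y x) \<and>
     (\<forall>x\<in>S. \<forall>y\<in>S. \<forall>w\<in>S. f (f x y) w = f x (f y w))"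

end

theory Submission
  imports Defs
begin

locale wb =
  fixes X :: "'a set" and m :: "'a \<Rightarrow> 'a \<Rightarrow> 'a" and z :: 'a
  assumes W: "weak_BCC X m z"
begin

lemma z_in: "z \<in> X" using W unfolding weak_BCC_def by blast
lemma cl: "x \<in> X \<Longrightarrow> y \<in> X \<Longrightarrow> m x y \<in> X" using W unfolding weak_BCC_def by blast
lemma A1: "x \<in> X \<Longrightarrow> y \<in> X \<Longrightarrow> w \<in> X \<Longrightarrow> m (m (m x y) (m w y)) (m x w) = z"
  using W unfolding weak_BCC_def by blast
lemma A2: "x \<in> X \<Longrightarrow> m x x = z" using W unfolding weak_BCC_def by blast
lemma A3: "x \<in> X \<Longrightarrow> m x z = x" using W unfolding weak_BCC_def by blast
lemma A4: "x \<in> X \<Longrightarrow> y \<in> X \<Longrightarrow> m x y = z \<Longrightarrow> m y x = z \<Longrightarrow> x = y"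
  using W unfolding weak_BCC_def by blast

lemma mono_r: assumes "x \<in> X" "y \<in> X" "w \<in> X" "m x y = z" shows "m (m x w) (m y w) = z"
proof -
  have "m (m (m x w) (m y w)) (m x y) = z" using A1 assms by blast
  then show ?thesis using assms(4) A3[OF cl[OF cl[OF assms(1,3)] cl[OF assms(2,3)]]] by simp
qed

lemma trans: assumes "x \<in> X" "y \<in> X" "w \<in> X" "m x y = z" "m y w = z" shows "m x w = z"
proof -
  have "m (m x w) (m y w) = z" using mono_r[OF assms(1-4)] .
  then show ?thesis using assms(5) A3[OF cl[OF assms(1,3)]] by simp
qed

lemma anti_l: assumes "x \<in> X" "y \<in> X" "w \<in> X" "m x y = z" shows "m (m w y) (m w x) = z"
proof -
  have "m (m (m w y) (m x y)) (m w x) = z" using A1 assms by blast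
  then show ?thesis using assms(4) A3[OF cl[OF assms(3,2)]] by simp
qed

lemma G4: assumes "a \<in> X" "x \<in> X" "y \<in> X" "m a x = z" "m a y = z" shows "m z (m x y) = z"
proof -
  have "m (m (m a y) (m x y)) (m a x) = z" using A1 assms by blast
  then show ?thesis using assms(4,5) A3[OF cl[OF z_in cl[OF assms(2,3)]]] by simp
qed

lemma b_le: assumes "x \<in> X" shows "m (m z (m z x)) x = z"
proof -
  have "m (m (m x x) (m z x)) (m x z) = z" using A1 assms z_in by blast
  then show ?thesis using A2[OF assms] A3[OF assms] by simp
qed

lemma b_min: assumes "x \<in> X" "v \<in> X" "m v (m z (m z x)) = z" shows "v = m z (m z x)"
proof -
  have bX: "m z (m z x) \<in> X" using cl z_in assms by blast
  have vx: "m v x = z" using trans[OF assms(2) bX assms(1) assms(3) b_le[OF assms(1)]] .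
  have "m (m (m v x) (m z x)) (m v z) = z" using A1 assms z_in by blast
  then have "m (m z (m z x)) v = z" using vx A3[OF assms(2)] by simp
  then show ?thesis using A4[OF assms(2) bX assms(3)] by simp
qed

lemma b_minimal: "x \<in> X \<Longrightarrow> m z (m z x) \<in> minimal_elems X m z"
  unfolding minimal_elems_def bcc_le_def using b_min cl z_in by blast

lemma min_zero: assumes "a \<in> minimal_elems X m z" "u \<in> X" "m z u = z" shows "m a u = a"
proof -
  have aX: "a \<in> X" using assms(1) unfolding minimal_elems_def by blast
  have "m (m a u) (m a z) = z" using anti_l[OF z_in assms(2) aX assms(3)] .
  then have "m (m a u) a = z" using A3 aX by simp
  then show ?thesis using assms(1) cl[OF aX assms(2)] unfolding minimal_elems_def bcc_le_def by blast
qed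

lemma closure: assumes "a \<in> minimal_elems X m z" "x \<in> branch X m z a" "y \<in> branch X m z a"
  shows "bcc_meet m x y \<in> branch X m z a"
proof -
  have aX: "a \<in> X" using assms(1) unfolding minimal_elems_def by blast
  have xX: "x \<in> X" and ax: "m a x = z" using assms(2) unfolding branch_def bcc_le_def by auto
  have yX: "y \<in> X" and ay: "m a y = z" using assms(3) unfolding branch_def bcc_le_def by auto
  define u where "u = m y x"
  have uX: "u \<in> X" using cl xX yX u_def by simp
  have "m z u = z" using G4[OF aX yX xX ay ax] u_def by simp
  then have au: "m a u = a" using min_zero assms(1) uX by blast
  have "m (m (m a u) (m y u)) (m a y) = z" using A1 aX uX yX by blast
  then have "m a (m y u) = z" using au ay A3 cl aX yX uX by metis
  then show ?thesis unfolding branch_def bcc_le_def bcc_meet_def u_def using cl xX yX by blast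
qed

lemma in_branch: "x \<in> X \<Longrightarrow> x \<in> branch X m z (m z (m z x))"
  unfolding branch_def bcc_le_def using b_le by blast

lemma sb_le: assumes "u \<in> X" "y \<in> X" "m u y = z" shows "same_branch X m z u y"
proof -
  let ?b = "m z (m z u)"
  have bX: "?b \<in> X" using cl z_in assms by blast
  have "m ?b y = z" using trans[OF bX assms(1,2) b_le[OF assms(1)] assms(3)] .
  then show ?thesis unfolding same_branch_def branch_def bcc_le_def
    using b_minimal[OF assms(1)] b_le[OF assms(1)] assms by blast
qed

lemma sb_sym: "same_branch X m z x y \<Longrightarrow> same_branch X m z y x"
  unfolding same_branch_def by blast

end

lemma sb_X: "same_branch X m z x y \<Longrightarrow> x \<in> X \<and> y \<in> X"
  unfolding same_branch_def branch_def by blast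

theorem theorem3p7:
  fixes X :: "'a set" and m :: "'a \<Rightarrow> 'a \<Rightarrow> 'a" and z :: 'a
  assumes "solid X m z"
  shows "(branchwise_commutative X m z
            \<longleftrightarrow> (\<forall>a\<in>minimal_elems X m z. semilattice_on (branch X m z a) (bcc_meet m)))
       \<and> (branchwise_commutative X m z
            \<longleftrightarrow> (\<forall>x\<in>X. \<forall>y\<in>X. same_branch X m z x y \<longrightarrow>
                   initial_part X m z x \<inter> initial_part X m z y
                     = initial_part X m z (bcc_meet m x y)))"
proof -
  have W: "weak_BCC X m z" using assms unfolding solid_def by blast
  interpret wb X m z using W by unfold_locales
  have S: "\<And>x y w. x \<in> X \<Longrightarrow> y \<in> X \<Longrightarrow> w \<in> X \<Longrightarrow> same_branch X m z x y \<Longrightarrow> m (m x y) w = m (m x w) y"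
    using assms unfolding solid_def by blast
  have solid_self: "m (m x w) x = m z w" if "x \<in> X" "w \<in> X" for x w
  proof -
    have "same_branch X m z x x" using sb_le[OF that(1) that(1) A2[OF that(1)]] .
    then have "m (m x x) w = m (m x w) x" using S that by blast
    then show ?thesis using A2 that by simp
  qed
  let ?P3 = "\<forall>x\<in>X. \<forall>y\<in>X. same_branch X m z x y \<longrightarrow>
                   initial_part X m z x \<inter> initial_part X m z y
                     = initial_part X m z (bcc_meet m x y)"
  let ?P2 = "\<forall>a\<in>minimal_elems X m z. semilattice_on (branch X m z a) (bcc_meet m)"
  have le_meet_y: "m (m y (m y x)) y = z" if sbxy: "same_branch X m z x y" for x y
  proof -
    obtain a where a: "a \<in> minimal_elems X m z" "x \<in> branch X m z a" "y \<in> branch X m z a"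
      using sbxy unfolding same_branch_def by blast
    have aX: "a \<in> X" using a(1) unfolding minimal_elems_def by blast
    have xX: "x \<in> X" and ax: "m a x = z" using a(2) unfolding branch_def bcc_le_def by auto
    have yX: "y \<in> X" and ay: "m a y = z" using a(3) unfolding branch_def bcc_le_def by auto
    have "m z (m y x) = z" using G4[OF aX yX xX ay ax] .
    then show ?thesis using solid_self[OF yX cl[OF yX xX]] by simp
  qed
  have bc3: "?P3" if bc: "branchwise_commutative X m z"
  proof (intro ballI impI)
    fix x y assume xX: "x \<in> X" and yX: "y \<in> X" and sb: "same_branch X m z x y"
    have mX: "bcc_meet m x y \<in> X" unfolding bcc_meet_def using cl xX yX by blast
    have eq: "m x (m x y) = m y (m y x)" using bc sb xX yX unfolding branchwise_commutative_def by blast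
    have my: "m (bcc_meet m x y) y = z" using le_meet_y[OF sb] unfolding bcc_meet_def .
    have mx: "m (bcc_meet m x y) x = z" using le_meet_y[OF sb_sym[OF sb]] eq unfolding bcc_meet_def by simp
    show "initial_part X m z x \<inter> initial_part X m z y = initial_part X m z (bcc_meet m x y)"
    proof
      show "initial_part X m z x \<inter> initial_part X m z y \<subseteq> initial_part X m z (bcc_meet m x y)"
      proof
        fix u assume "u \<in> initial_part X m z x \<inter> initial_part X m z y"
        then have uX: "u \<in> X" and ux: "m u x = z" and uy: "m u y = z"
          unfolding initial_part_def bcc_le_def by auto
        have "same_branch X m z u y" using sb_le[OF uX yX uy] .
        then have "m u (m u y) = m y (m y u)" using bc uX yX unfolding branchwise_commutative_def by blast
        then have u_eq: "u = m y (m y u)" using uy A3 uX by simp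
        have "m (m y x) (m y u) = z" using anti_l[OF uX xX yX ux] .
        then have "m (m y (m y u)) (m y (m y x)) = z"
          using anti_l[OF cl[OF yX xX] cl[OF yX uX] yX] by blast
        then show "u \<in> initial_part X m z (bcc_meet m x y)"
          using u_eq uX unfolding initial_part_def bcc_le_def bcc_meet_def by simp
      qed
    next
      show "initial_part X m z (bcc_meet m x y) \<subseteq> initial_part X m z x \<inter> initial_part X m z y"
        using trans[OF _ mX xX _ mx] trans[OF _ mX yX _ my]
        unfolding initial_part_def bcc_le_def by blast
    qed
  qed
  have ip_eq: "p = q" if "p \<in> X" "q \<in> X" "initial_part X m z p = initial_part X m z q" for p q
  proof -
    have "p \<in> initial_part X m z q" using that A2[OF that(1)] unfolding initial_part_def bcc_le_def by blast
    moreover have "q \<in> initial_part X m z p" using that A2[OF that(2)] unfolding initial_part_def bcc_le_def by blast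
    ultimately show ?thesis using A4 that unfolding initial_part_def bcc_le_def by blast
  qed
  have bc2: "?P2" if bc: "branchwise_commutative X m z"
  proof
    fix a assume a: "a \<in> minimal_elems X m z"
    let ?S = "branch X m z a"
    have P3: ?P3 using bc3 bc .
    have SX: "?S \<subseteq> X" unfolding branch_def by blast
    have sbS: "same_branch X m z x y" if "x \<in> ?S" "y \<in> ?S" for x y
      using a that unfolding same_branch_def by blast
    have c: "\<forall>x\<in>?S. \<forall>y\<in>?S. bcc_meet m x y \<in> ?S" using closure a by blast
    have i: "\<forall>x\<in>?S. bcc_meet m x x = x" unfolding bcc_meet_def using SX A2 A3 by auto
    have co: "\<forall>x\<in>?S. \<forall>y\<in>?S. bcc_meet m x y = bcc_meet m y x"
      unfolding bcc_meet_def using bc sbS SX unfolding branchwise_commutative_def by (metis subsetD)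
    have as: "\<forall>x\<in>?S. \<forall>y\<in>?S. \<forall>w\<in>?S. bcc_meet m (bcc_meet m x y) w = bcc_meet m x (bcc_meet m y w)"
    proof (intro ballI)
      fix x y w assume xs: "x \<in> ?S" and ys: "y \<in> ?S" and ws: "w \<in> ?S"
      have xy: "bcc_meet m x y \<in> ?S" and yw: "bcc_meet m y w \<in> ?S" using c xs ys ws by auto
      have "initial_part X m z (bcc_meet m (bcc_meet m x y) w)
          = initial_part X m z (bcc_meet m x y) \<inter> initial_part X m z w"
        using P3 xy ws sbS SX by (metis subsetD)
      also have "\<dots> = initial_part X m z x \<inter> initial_part X m z y \<inter> initial_part X m z w"
        using P3 xs ys sbS SX by (metis subsetD)
      also have "\<dots> = initial_part X m z x \<inter> initial_part X m z (bcc_meet m y w)"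
        using P3 ys ws sbS SX by (metis subsetD Int_assoc)
      also have "\<dots> = initial_part X m z (bcc_meet m x (bcc_meet m y w))"
        using P3 xs yw sbS SX by (metis subsetD)
      finally show "bcc_meet m (bcc_meet m x y) w = bcc_meet m x (bcc_meet m y w)"
        using ip_eq c xs ys ws xy yw SX by (metis subsetD)
    qed
    show "semilattice_on ?S (bcc_meet m)" unfolding semilattice_on_def using c i co as by blast
  qed
  have two_bc: "branchwise_commutative X m z" if P2: ?P2
    unfolding branchwise_commutative_def
  proof (intro ballI impI)
    fix x y assume "x \<in> X" "y \<in> X" "same_branch X m z x y"
    then obtain a where a: "a \<in> minimal_elems X m z" "x \<in> branch X m z a" "y \<in> branch X m z a"
      unfolding same_branch_def by blast
    have "semilattice_on (branch X m z a) (bcc_meet m)" using P2 a(1) by blast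
    then have "bcc_meet m y x = bcc_meet m x y" using a unfolding semilattice_on_def by blast
    then show "m x (m x y) = m y (m y x)" unfolding bcc_meet_def .
  qed
  have three_bc: "branchwise_commutative X m z" if P3: ?P3
    unfolding branchwise_commutative_def
  proof (intro ballI impI)
    fix x y assume xX: "x \<in> X" and yX: "y \<in> X" and sb: "same_branch X m z x y"
    have "initial_part X m z (bcc_meet m x y) = initial_part X m z (bcc_meet m y x)"
      using P3 xX yX sb sb_sym by blast
    moreover have "bcc_meet m x y \<in> X" "bcc_meet m y x \<in> X"
      unfolding bcc_meet_def using cl[OF xX cl[OF xX yX]] cl[OF yX cl[OF yX xX]] by auto
    ultimately have "bcc_meet m x y = bcc_meet m y x"
      using ip_eq by blast
    then show "m x (m x y) = m y (m y x)" unfolding bcc_meet_def by simp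
  qed
  show ?thesis using bc3 bc2 two_bc three_bc by blast
qed

end
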